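(* Let $c_0=7/(2\sqrt3)$ and $c_1=2\sqrt2$, and let $\alpha(c)$ be the linear function of $c$ with $\alpha(c_0)=\sqrt3/4$ and $\alpha(c_1)=1/\sqrt2$. Then, for $c>0$, $$ s(c)\ge\begin{cases}\frac{9c^2}{28}, & c\le c_0,\\[2pt] -c^2+7\alpha c+\frac{c}{\alpha}-11\alpha^2-2-\frac{1}{4\alpha^2}, & c_0\le c\le c_1,\end{cases}$$ where $\alpha=\alpha(c)$.
   Context: $[n]=\{1,\dots,n\}$; for $A\subset\mathbb Z$, $A+A=\{a+b:a,b\in A\}$. Let $s(k,n)=\max\{|A+A|: A\subseteq[n],\ |A|=k\}$ and, for real $c>0$, $s(c)=\liminf_{n\to\infty} s(\lfloor cn^{1/2}\rfloor,n)/n$. *)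

theory Defs
  imports "HOL-Analysis.Analysis"
begin

definition sumset :: "int set \<Rightarrow> int set" where
  "sumset A = {a + b | a b. a \<in> A \<and> b \<in> A}"

definition s_kn :: "nat \<Rightarrow> nat \<Rightarrow> nat" where
  "s_kn k n = Max {card (sumset A) | A. A \<subseteq> {1..int n} \<and> card A = k}"

definition s_c :: "real \<Rightarrow> ereal" where
  "s_c c = liminf (\<lambda>n::nat. ereal (real (s_kn (nat \<lfloor>c * sqrt (real n)\<rfloor>) n) / real n))"

definition c0 :: real where "c0 = 7 / (2 * sqrt 3)"
definition c1 :: real where "c1 = 2 * sqrt 2"

definition alpha :: "real \<Rightarrow> real" where
  "alpha c = sqrt 3 / 4 + (1 / sqrt 2 - sqrt 3 / 4) / (c1 - c0) * (c - c0)"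

end

theory Submission
  imports Defs "HOL-Real_Asymp.Real_Asymp"
begin


definition hB :: "int \<Rightarrow> int \<Rightarrow> int" where "hB L T = 2*L+2*T+1"

definition hexA :: "int \<Rightarrow> int \<Rightarrow> int set" where
"hexA L T =
 (\<lambda>i. i + 1) ` {0..L} \<union>
 (\<lambda>j. L + j + hB L T * j + 1) ` {0..T} \<union>
 (\<lambda>j. L + T + hB L T * (T + j) + 1) ` {0..L} \<union>
 (\<lambda>i. T + i + hB L T * (T + L) + 1) ` {0..L} \<union>
 (\<lambda>j. j + hB L T * (L + j) + 1) ` {0..T} \<union>
 (\<lambda>j. hB L T * j + 1) ` {0..L}"

lemma cover:
  fixes L T x Y :: int
  assumes "0 \<le> T" "T \<le> L" "0 \<le> x" "x \<le> 2*L+2*T" "0 \<le> Y" "Y \<le> 2*L+2*T" "x - Y \<le> 2*L" "Y - x \<le> 2*L"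
  shows "(x \<le> L \<and> Y \<le> L) \<or>
   (L+T \<le> x \<and> x \<le> 2*L+T \<and> T \<le> Y \<and> Y \<le> T+L) \<or>
   (T \<le> x \<and> x \<le> T+L \<and> T+L \<le> Y \<and> Y \<le> T+2*L) \<or>
   (L+2*T \<le> x \<and> 2*T+L \<le> Y) \<or>
   (Y \<le> T \<and> L+Y \<le> x \<and> x \<le> 2*L+Y) \<or>
   (L \<le> x \<and> x \<le> L+T \<and> x-L \<le> Y \<and> Y \<le> x) \<or>
   (2*L+T \<le> x \<and> x-2*L \<le> Y \<and> Y \<le> x-L) \<or>
   (T+L \<le> Y \<and> Y \<le> 2*T+L \<and> Y \<le> x \<and> x \<le> Y+L) \<or>
   (L \<le> Y \<and> Y \<le> L+T \<and> Y-L \<le> x \<and> x \<le> Y) \<or>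
   (x \<le> T \<and> L+x \<le> Y \<and> Y \<le> 2*L+x) \<or>
   (L+T \<le> x \<and> x \<le> L+2*T \<and> x \<le> Y \<and> Y \<le> x+L) \<or>
   (2*L+T \<le> Y \<and> Y-2*L \<le> x \<and> x \<le> Y-L)"
  using assms by smt

lemma sumsetI: "a \<in> A \<Longrightarrow> b \<in> A \<Longrightarrow> v = a + b \<Longrightarrow> v \<in> sumset A"
  unfolding sumset_def by blast

lemma in_sumset:
  fixes L T x Y :: int
  assumes a: "0 \<le> T" "T \<le> L" "0 \<le> x" "x \<le> 2*L+2*T" "0 \<le> Y" "Y \<le> 2*L+2*T" "x - Y \<le> 2*L" "Y - x \<le> 2*L"
  shows "x + hB L T * Y + 2 \<in> sumset (hexA L T)"
proof -
  define B where "B = hB L T"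
  let ?S1 = "(\<lambda>i. i + 1) ` {0..L}"
  let ?S2 = "(\<lambda>j. L + j + B * j + 1) ` {0..T}"
  let ?S3 = "(\<lambda>j. L + T + B * (T + j) + 1) ` {0..L}"
  let ?S4 = "(\<lambda>i. T + i + B * (T + L) + 1) ` {0..L}"
  let ?S5 = "(\<lambda>j. j + B * (L + j) + 1) ` {0..T}"
  let ?S6 = "(\<lambda>j. B * j + 1) ` {0..L}"
  have A: "hexA L T = ?S1 \<union> ?S2 \<union> ?S3 \<union> ?S4 \<union> ?S5 \<union> ?S6"
    unfolding hexA_def B_def by simp
  have m1: "i \<in> {0..L} \<Longrightarrow> i + 1 \<in> hexA L T" for i unfolding A by blast
  have m2: "j \<in> {0..T} \<Longrightarrow> L + j + B * j + 1 \<in> hexA L T" for j unfolding A by blast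
  have m3: "j \<in> {0..L} \<Longrightarrow> L + T + B * (T + j) + 1 \<in> hexA L T" for j unfolding A by blast
  have m4: "i \<in> {0..L} \<Longrightarrow> T + i + B * (T + L) + 1 \<in> hexA L T" for i unfolding A by blast
  have m5: "j \<in> {0..T} \<Longrightarrow> j + B * (L + j) + 1 \<in> hexA L T" for j unfolding A by blast
  have m6: "j \<in> {0..L} \<Longrightarrow> B * j + 1 \<in> hexA L T" for j unfolding A by blast
  show ?thesis
    using cover[OF a]
  proof (elim disjE conjE)
    assume "x \<le> L" "Y \<le> L"
    then show ?thesis using a by (intro sumsetI[OF m1[of x] m6[of Y]]) (auto simp: algebra_simps B_def)
  next
    assume "L+T \<le> x" "x \<le> 2*L+T" "T \<le> Y" "Y \<le> T+L"
    then show ?thesis using a by (intro sumsetI[OF m1[of "x-L-T"] m3[of "Y-T"]]) (auto simp: algebra_simps B_def)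
  next
    assume "T \<le> x" "x \<le> T+L" "T+L \<le> Y" "Y \<le> T+2*L"
    then show ?thesis using a by (intro sumsetI[OF m6[of "Y-T-L"] m4[of "x-T"]]) (auto simp: algebra_simps B_def)
  next
    assume "L+2*T \<le> x" "2*T+L \<le> Y"
    then show ?thesis using a by (intro sumsetI[OF m3[of "Y-2*T-L"] m4[of "x-L-2*T"]]) (auto simp: algebra_simps B_def)
  next
    assume "Y \<le> T" "L+Y \<le> x" "x \<le> 2*L+Y"
    then show ?thesis using a by (intro sumsetI[OF m2[of Y] m1[of "x-L-Y"]]) (auto simp: algebra_simps B_def)
  next
    assume "L \<le> x" "x \<le> L+T" "x-L \<le> Y" "Y \<le> x"
    then show ?thesis using a by (intro sumsetI[OF m2[of "x-L"] m6[of "Y-(x-L)"]]) (auto simp: algebra_simps B_def)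
  next
    assume "2*L+T \<le> x" "x-2*L \<le> Y" "Y \<le> x-L"
    then show ?thesis using a by (intro sumsetI[OF m2[of "x-2*L-T"] m3[of "Y-x+2*L"]]) (auto simp: algebra_simps B_def)
  next
    assume "T+L \<le> Y" "Y \<le> 2*T+L" "Y \<le> x" "x \<le> Y+L"
    then show ?thesis using a by (intro sumsetI[OF m2[of "Y-T-L"] m4[of "x-Y"]]) (auto simp: algebra_simps B_def)
  next
    assume "L \<le> Y" "Y \<le> L+T" "Y-L \<le> x" "x \<le> Y"
    then show ?thesis using a by (intro sumsetI[OF m5[of "Y-L"] m1[of "x-(Y-L)"]]) (auto simp: algebra_simps B_def)
  next
    assume "x \<le> T" "L+x \<le> Y" "Y \<le> 2*L+x"
    then show ?thesis using a by (intro sumsetI[OF m5[of x] m6[of "Y-L-x"]]) (auto simp: algebra_simps B_def)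
  next
    assume "L+T \<le> x" "x \<le> L+2*T" "x \<le> Y" "Y \<le> x+L"
    then show ?thesis using a by (intro sumsetI[OF m5[of "x-L-T"] m3[of "Y-x"]]) (auto simp: algebra_simps B_def)
  next
    assume "2*L+T \<le> Y" "Y-2*L \<le> x" "x \<le> Y-L"
    then show ?thesis using a by (intro sumsetI[OF m5[of "Y-2*L-T"] m4[of "x-Y+2*L"]]) (auto simp: algebra_simps B_def)
  qed
qed

lemma finite_sumset: "finite A \<Longrightarrow> finite (sumset A)"
proof -
  assume "finite A"
  have "sumset A = (\<lambda>(a,b). a + b) ` (A \<times> A)" unfolding sumset_def by auto
  then show ?thesis using \<open>finite A\<close> by simp
qed

lemma finite_hexA: "finite (hexA L T)" unfolding hexA_def by simp

lemma decomp:
  fixes B x1 x2 y1 y2 :: int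
  assumes "0 \<le> x1" "x1 < B" "0 \<le> x2" "x2 < B" "x1 + B*y1 = x2 + B*y2"
  shows "x1 = x2 \<and> y1 = y2"
proof -
  have "y1 = y2"
  proof (rule ccontr)
    assume "y1 \<noteq> y2"
    then consider "y1 + 1 \<le> y2" | "y2 + 1 \<le> y1" by linarith
    then show False
    proof cases
      case 1
      then have "B*(y1+1) \<le> B*y2" using assms by (intro mult_left_mono) auto
      then show False using assms by (simp add: algebra_simps)
    next
      case 2
      then have "B*(y2+1) \<le> B*y1" using assms by (intro mult_left_mono) auto
      then show False using assms by (simp add: algebra_simps)
    qed
  qed
  then show ?thesis using assms by simp
qed

definition gmap :: "int \<Rightarrow> int \<Rightarrow> int \<times> int \<Rightarrow> int" where
"gmap L T p = (let d = fst p; j = snd p in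
   if j \<le> 2*L+2*T - d then (d + j) + hB L T * j + 2
   else (d - 2*L - 1 + j - 2*T) + hB L T * (j - 2*T) + 2)"

lemma gmap_in:
  assumes "0 \<le> T" "T \<le> L" "p \<in> {1..2*L} \<times> {0..2*L+4*T}"
  shows "gmap L T p \<in> sumset (hexA L T)"
proof -
  obtain d j where p: "p = (d,j)" by force
  show ?thesis
  proof (cases "j \<le> 2*L+2*T - d")
    case True
    then have "gmap L T p = (d + j) + hB L T * j + 2" unfolding gmap_def p by simp
    moreover have "(d + j) + hB L T * j + 2 \<in> sumset (hexA L T)"
      using assms True p by (intro in_sumset) auto
    ultimately show ?thesis by simp
  next
    case False
    then have "gmap L T p = (d - 2*L - 1 + j - 2*T) + hB L T * (j - 2*T) + 2" unfolding gmap_def p by simp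
    moreover have "(d - 2*L - 1 + j - 2*T) + hB L T * (j - 2*T) + 2 \<in> sumset (hexA L T)"
      using assms False p by (intro in_sumset) auto
    ultimately show ?thesis by simp
  qed
qed

lemma gmap_inj:
  assumes "0 \<le> T" "T \<le> L"
  shows "inj_on (gmap L T) ({1..2*L} \<times> {0..2*L+4*T})"
proof (rule inj_onI)
  fix p q assume p: "p \<in> {1..2*L} \<times> {0..2*L+4*T}" and q: "q \<in> {1..2*L} \<times> {0..2*L+4*T}"
    and e: "gmap L T p = gmap L T q"
  obtain d j where pd: "p = (d,j)" by force
  obtain d' j' where qd: "q = (d',j')" by force
  define B where "B = hB L T"
  have B: "B = 2*L+2*T+1" unfolding B_def hB_def by simp
  let ?x = "\<lambda>d j. if j \<le> 2*L+2*T - d then d + j else d - 2*L - 1 + j - 2*T"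
  let ?y = "\<lambda>d j. if j \<le> 2*L+2*T - d then j else j - 2*T"
  have g: "gmap L T (d, j) = ?x d j + B * ?y d j + 2" for d j
    unfolding gmap_def B_def by simp
  have xr: "0 \<le> ?x d j \<and> ?x d j < B" if "(d,j) \<in> {1..2*L} \<times> {0..2*L+4*T}" for d j
    using that assms B by auto
  have "?x d j = ?x d' j' \<and> ?y d j = ?y d' j'"
    apply (rule decomp[of _ B])
    using xr[of d j] xr[of d' j'] p q pd qd e g apply auto
    done
  then show "p = q" using pd qd p q assms by (auto split: if_splits)
qed

lemma card_sumset_hex:
  assumes "0 \<le> T" "T \<le> L"
  shows "card (sumset (hexA L T)) \<ge> nat (2*L) * nat (2*L+4*T+1)"
proof -
  have "card ({1..2*L} \<times> {0..2*L+4*T}) = nat (2*L) * nat (2*L+4*T+1)"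
    by (simp add: card_cartesian_product)
  also have "\<dots> = card (gmap L T ` ({1..2*L} \<times> {0..2*L+4*T}))"
    using card_image[OF gmap_inj[OF assms]] by simp
  also have "\<dots> \<le> card (sumset (hexA L T))"
    by (rule card_mono) (use gmap_in[OF assms] finite_sumset finite_hexA in auto)
  finally show ?thesis by simp
qed


lemma card_hexA:
  assumes "0 \<le> T" "T \<le> L"
  shows "int (card (hexA L T)) \<le> 4*L+2*T+6"
proof -
  let ?B = "hB L T"
  have "card (hexA L T) \<le> card ((\<lambda>i. i + 1) ` {0..L}) + card ((\<lambda>j. L + j + ?B * j + 1) ` {0..T}) +
     card ((\<lambda>j. L + T + ?B * (T + j) + 1) ` {0..L}) + card ((\<lambda>i. T + i + ?B * (T + L) + 1) ` {0..L}) +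
     card ((\<lambda>j. j + ?B * (L + j) + 1) ` {0..T}) + card ((\<lambda>j. ?B * j + 1) ` {0..L})"
    unfolding hexA_def by (rule order_trans[OF card_Un_le] add_mono order_refl)+
  also have "\<dots> \<le> card {0..L} + card {0..T} + card {0..L} + card {0..L} + card {0..T} + card {0..L}"
    by (intro add_mono card_image_le) auto
  finally show ?thesis using assms by simp
qed

lemma hexA_range:
  assumes "0 \<le> T" "T \<le> L"
  shows "hexA L T \<subseteq> {1..(L+T) + hB L T * (L+T) + 1}"
proof -
  define B where "B = hB L T"
  have B0: "0 \<le> B" unfolding B_def hB_def using assms by simp
  have mono: "B * a \<le> B * b" if "a \<le> b" for a b using B0 that by (simp add: mult_left_mono)
  have pos: "0 \<le> B * a" if "0 \<le> a" for a using B0 that by simp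
  show ?thesis
    unfolding hexA_def B_def[symmetric]
  proof (intro Un_least image_subsetI)
    fix i assume "i \<in> {0..L}" then show "i + 1 \<in> {1..(L+T) + B * (L+T) + 1}"
      using pos[of "L+T"] assms by auto
  next
    fix j assume j: "j \<in> {0..T}" then show "L + j + B * j + 1 \<in> {1..(L+T) + B * (L+T) + 1}"
      using pos[of j] mono[of j "L+T"] assms by auto
  next
    fix j assume j: "j \<in> {0..L}" then show "L + T + B * (T + j) + 1 \<in> {1..(L+T) + B * (L+T) + 1}"
      using pos[of "T+j"] mono[of "T+j" "L+T"] assms by auto
  next
    fix j assume j: "j \<in> {0..L}" then show "T + j + B * (T + L) + 1 \<in> {1..(L+T) + B * (L+T) + 1}"
      using pos[of "T+L"] assms by (auto simp: add.commute)
  next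
    fix j assume j: "j \<in> {0..T}" then show "j + B * (L + j) + 1 \<in> {1..(L+T) + B * (L+T) + 1}"
      using pos[of "L+j"] mono[of "L+j" "L+T"] assms by auto
  next
    fix j assume j: "j \<in> {0..L}" then show "B * j + 1 \<in> {1..(L+T) + B * (L+T) + 1}"
      using pos[of "j"] mono[of "j" "L+T"] assms by auto
  qed
qed

lemma sumset_mono: "A \<subseteq> A' \<Longrightarrow> sumset A \<subseteq> sumset A'"
  unfolding sumset_def by blast

lemma s_kn_ge:
  fixes A :: "int set"
  assumes "A \<subseteq> {1..int n}" "card A \<le> k" "k \<le> n"
  shows "card (sumset A) \<le> s_kn k n"
proof -
  have fA: "finite A" using assms(1) finite_subset by blast
  have "card ({1..int n} - A) = n - card A"
    using assms(1) fA by (simp add: card_Diff_subset)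
  then have "k - card A \<le> card ({1..int n} - A)" using assms by simp
  then obtain C where C: "C \<subseteq> {1..int n} - A" "card C = k - card A" "finite C"
    by (meson obtain_subset_with_card_n)
  define A' where "A' = A \<union> C"
  have A'1: "A' \<subseteq> {1..int n}" using C assms unfolding A'_def by auto
  have "card A' = card A + card C" unfolding A'_def using C fA by (intro card_Un_disjoint) auto
  then have A'2: "card A' = k" using C assms by simp
  have "card (sumset A) \<le> card (sumset A')"
    by (rule card_mono) (use finite_sumset[of A'] A'1 finite_subset sumset_mono[of A A'] A'_def in auto)
  also have "card (sumset A') \<le> s_kn k n"
    unfolding s_kn_def
  proof (rule Max_ge)
    have "{card (sumset A) |A. A \<subseteq> {1..int n} \<and> card A = k} \<subseteq> (\<lambda>A. card (sumset A)) ` Pow {1..int n}"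
      by auto
    then show "finite {card (sumset A) |A. A \<subseteq> {1..int n} \<and> card A = k}"
      by (rule finite_subset) simp
    show "card (sumset A') \<in> {card (sumset A) |A. A \<subseteq> {1..int n} \<and> card A = k}"
      using A'1 A'2 by blast
  qed
  finally show ?thesis .
qed

lemma hex_s_kn:
  fixes L T :: int and k n :: nat
  assumes "0 \<le> T" "T \<le> L" "4*L+2*T+6 \<le> int k" "k \<le> n"
    "(L+T) * (2*L+2*T+2) + 1 \<le> int n"
  shows "real_of_int (2*L*(2*L+4*T+1)) \<le> real (s_kn k n)"
proof -
  have r: "hexA L T \<subseteq> {1..int n}"
    using hexA_range[OF assms(1,2)] assms(5) unfolding hB_def by (auto simp: algebra_simps)
  have "card (hexA L T) \<le> k" using card_hexA[OF assms(1,2)] assms(3) by simp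
  then have "card (sumset (hexA L T)) \<le> s_kn k n" using s_kn_ge[OF r _ assms(4)] by simp
  moreover have "nat (2*L) * nat (2*L+4*T+1) \<le> card (sumset (hexA L T))"
    using card_sumset_hex[OF assms(1,2)] .
  ultimately have "nat (2*L) * nat (2*L+4*T+1) \<le> s_kn k n" by linarith
  then have "int (nat (2*L) * nat (2*L+4*T+1)) \<le> int (s_kn k n)" by linarith
  then have "2*L*(2*L+4*T+1) \<le> int (s_kn k n)" using assms(1,2) by simp
  then show ?thesis by (metis of_int_le_iff of_int_of_nat_eq)
qed



lemma sqrt_large: "eventually (\<lambda>n. R \<le> sqrt (real n)) sequentially"
proof -
  have "filterlim (\<lambda>n. sqrt (real n)) at_top sequentially" by real_asymp
  then show ?thesis by (simp add: filterlim_at_top)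
qed

lemma inv_sqrt_lim: "(\<lambda>n. 1 / sqrt (real n)) \<longlonglongrightarrow> 0" by real_asymp

lemma aux_div: fixes X Y R s :: real shows "0 < Y \<Longrightarrow> X / Y \<le> R \<Longrightarrow> R \<le> s \<Longrightarrow> X \<le> Y * s"
proof -
  assume a: "0 < Y" "X / Y \<le> R" "R \<le> s"
  then have "X \<le> R * Y" by (simp add: pos_divide_le_eq)
  also have "\<dots> \<le> s * Y" using a by (intro mult_right_mono) auto
  finally show ?thesis by (simp add: mult.commute)
qed

lemma asym:
  fixes c l t :: real
  assumes c: "c > 0" and l: "l > 0" and t: "0 \<le> t" "t \<le> 1"
    and h1: "(4+2*t)*l < c" and h2: "2*(1+t)^2*l^2 < 1"
  shows "ereal (l^2*(4+8*t)) \<le> s_c c"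
proof -
  define a where "a = 2*(1+t)^2*l^2"
  define R where "R = Max {1, 3/l, 7/(c - (4+2*t)*l), c, (2*(1+t)*l+1)/(1-a)}"
  define h where "h n = 2*(l - 1/sqrt (real n))*((2+4*t)*l - 6/sqrt (real n))" for n
  have i6: "(\<lambda>n. 6 / sqrt (real n)) \<longlonglongrightarrow> 0" by real_asymp
  have hlim: "h \<longlonglongrightarrow> 2*(l - 0)*((2+4*t)*l - 0)"
    unfolding h_def
    by (intro tendsto_intros inv_sqrt_lim i6)
  have hlim': "(\<lambda>n. ereal (h n)) \<longlonglongrightarrow> ereal (l^2*(4+8*t))"
    using hlim by (intro tendsto_ereal) (simp add: power2_eq_square algebra_simps)
  have ev: "eventually (\<lambda>n. ereal (h n) \<le> ereal (real (s_kn (nat \<lfloor>c * sqrt (real n)\<rfloor>) n) / real n)) sequentially"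
    using sqrt_large[of R]
  proof eventually_elim
    case (elim n)
    define s where "s = sqrt (real n)"
    have Rge: "1 \<le> R" "3/l \<le> R" "7/(c - (4+2*t)*l) \<le> R" "c \<le> R" "(2*(1+t)*l+1)/(1-a) \<le> R"
      unfolding R_def by auto
    have sR: "R \<le> s" using elim s_def by simp
    have s1: "1 \<le> s" using Rge sR by simp
    have ns: "real n = s * s" unfolding s_def by simp
    have ls3: "3 \<le> l * s" using aux_div[OF l Rge(2) sR] .
    have cpos: "0 < c - (4+2*t)*l" using h1 by simp
    have s7: "7 \<le> (c - (4+2*t)*l) * s" using aux_div[OF cpos Rge(3) sR] .
    have apos: "0 < 1 - a" using h2 a_def by simp
    have sa: "2*(1+t)*l+1 \<le> (1-a) * s" using aux_div[OF apos Rge(5) sR] .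
    define L where "L = \<lfloor>l * s\<rfloor>"
    define T where "T = \<lfloor>t*l * s\<rfloor>"
    define k where "k = nat \<lfloor>c * s\<rfloor>"
    have Lb: "l * s - 1 < L" "L \<le> l * s" unfolding L_def by linarith+
    have Tb: "t*l * s - 1 < T" "T \<le> t*l * s" unfolding T_def by linarith+
    have tls: "0 \<le> t*l * s" "t*l * s \<le> l * s" using t l s1 by (auto simp: mult_right_le_one_le mult_le_cancel_right1)
    have T0: "0 \<le> T" unfolding T_def using tls by simp
    have TL: "T \<le> L" unfolding T_def L_def using tls by (intro floor_mono) simp
    have cs0: "0 \<le> c * s" using c s1 by simp
    have kk: "real_of_int (int k) = \<lfloor>c * s\<rfloor>" unfolding k_def using cs0 by simp
    have k1: "4*L+2*T+6 \<le> int k"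
    proof -
      have "real_of_int (4*L+2*T+6) \<le> (4+2*t)*l * s + 6" using Lb Tb by (simp add: algebra_simps)
      also have "\<dots> \<le> c * s - 1" using s7 by (simp add: algebra_simps)
      also have "\<dots> < \<lfloor>c * s\<rfloor>" by linarith
      finally have "real_of_int (4*L+2*T+6) < real_of_int (int k)" using kk by simp
      then show ?thesis by linarith
    qed
    have k2: "k \<le> n"
    proof -
      have "real_of_int \<lfloor>c * s\<rfloor> \<le> c * s" by linarith
      also have "\<dots> \<le> s * s" using Rge(4) sR s1 by (intro mult_right_mono) auto
      finally have "real k \<le> real n" using kk ns by simp
      then show ?thesis by simp
    qed
    have k3: "(L+T) * (2*L+2*T+2) + 1 \<le> int n"
    proof -
      define w where "w = (1+t)*l * s"
      have w0: "real_of_int (L+T) \<le> w" "0 \<le> real_of_int (L+T)" using Lb Tb T0 TL unfolding w_def by (simp_all add: algebra_simps)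
      have "real_of_int ((L+T) * (2*L+2*T+2) + 1) = real_of_int (L+T) * (2*real_of_int (L+T)+2) + 1" by simp
      also have "\<dots> \<le> w*(2*w+2) + 1" using w0 by (intro add_mono mult_mono) auto
      also have "\<dots> = a*(s * s) + 2*(1+t)*l * s + 1" unfolding w_def a_def by (simp add: power2_eq_square algebra_simps)
      also have "\<dots> \<le> s * s"
      proof -
        have "(2*(1+t)*l+1) * s \<le> ((1-a) * s) * s" using sa s1 by (intro mult_right_mono) auto
        then show ?thesis using s1 by (simp add: algebra_simps)
      qed
      finally have "real_of_int ((L+T) * (2*L+2*T+2) + 1) \<le> real_of_int (int n)" using ns by simp
      then show ?thesis by linarith
    qed
    have main: "real_of_int (2*L*(2*L+4*T+1)) \<le> real (s_kn k n)"
      by (rule hex_s_kn[OF T0 TL k1 k2 k3])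
    have "2*(l * s - 1)*((2+4*t)*l * s - 6) \<le> real_of_int (2*L*(2*L+4*T+1))"
    proof -
      have a1: "0 \<le> l * s - 1" using ls3 by simp
      have a2: "0 \<le> (2+4*t)*l * s - 6" using ls3 t l s1
      proof -
        have "0 \<le> 4*t*(l * s)" using t l s1 by simp
        then show ?thesis using ls3 by (simp add: algebra_simps)
      qed
      have "(2+4*t)*l * s - 6 \<le> 2*real_of_int L + 4*real_of_int T + 1" using Lb Tb by (simp add: algebra_simps)
      then have "(l * s - 1)*((2+4*t)*l * s - 6) \<le> real_of_int L * (2*real_of_int L + 4*real_of_int T + 1)"
        using Lb a1 a2 by (intro mult_mono) auto
      then have "2*((l* s - 1)*((2+4*t)*l* s - 6)) \<le> 2*(real_of_int L * (2*real_of_int L + 4*real_of_int T + 1))"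
        by linarith
      then show ?thesis by (simp only: mult.assoc of_int_mult of_int_add of_int_numeral of_int_1)
    qed
    also note main
    finally have m2: "2*(l * s - 1)*((2+4*t)*l * s - 6) \<le> real (s_kn k n)" .
    have "h n = 2*(l * s - 1)*((2+4*t)*l * s - 6) / (s * s)"
      unfolding h_def s_def[symmetric] using s1 by (simp add: field_simps)
    also have "\<dots> \<le> real (s_kn k n) / (s * s)" using m2 s1 by (intro divide_right_mono) auto
    finally have "h n \<le> real (s_kn k n) / real n" using ns by simp
    then show ?case unfolding k_def s_def by simp
  qed
  have "ereal (l^2*(4+8*t)) = liminf (\<lambda>n. ereal (h n))"
    using lim_imp_Liminf[OF _ hlim'] by simp
  also have "\<dots> \<le> s_c c" unfolding s_c_def by (rule Liminf_mono[OF ev])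
  finally show ?thesis .
qed



lemma q_lemma:
  fixes S :: ereal and v :: real
  assumes v: "0 \<le> v" and H: "\<And>q. 0 < q \<Longrightarrow> q < 1 \<Longrightarrow> ereal (q* v) \<le> S"
  shows "ereal v \<le> S"
proof (rule ccontr)
  assume "\<not> ereal v \<le> S"
  then have "S < ereal v" by simp
  then obtain z where z: "S < ereal z" "ereal z < ereal v" using ereal_dense2 by blast
  show False
  proof (cases "v = 0")
    case True
    have "ereal ((1/2)* v) \<le> S" by (rule H) auto
    then have "ereal 0 < ereal z" using z True by (metis mult_zero_right order_le_less_trans)
    then show ?thesis using z True by simp
  next
    case False
    then have vp: "0 < v" using v by simp
    define q where "q = (max z 0 / v + 1)/2"
    have zv: "z < v" using z by simp
    have "max z 0 / v < 1" using zv vp by (simp add: field_simps)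
    moreover have "0 \<le> max z 0 / v" using vp by simp
    ultimately have q: "0 < q" "q < 1" unfolding q_def by auto
    have "q * v = (max z 0 + v)/2" unfolding q_def using vp by (simp add: field_simps)
    then have "z < q* v" using zv by simp
    moreover have "ereal (q* v) \<le> S" using H q by simp
    ultimately show False using z(1) by (metis ereal_less_eq(3) less_le_not_le order_le_less_trans)
  qed
qed

lemma V1:
  fixes c :: real
  assumes c: "0 < c" "c \<le> 3 * sqrt 2 / 2"
  shows "ereal (c^2/3) \<le> s_c c"
proof (rule q_lemma)
  show "0 \<le> c^2/3" by simp
  fix q :: real assume q: "0 < q" "q < 1"
  define l where "l = sqrt q * c / 6"
  have sq: "sqrt q < 1" "0 < sqrt q" using q by auto
  have l0: "0 < l" unfolding l_def using sq c by simp
  have c2: "c^2 \<le> 9/2"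
  proof -
    have "c^2 \<le> (3 * sqrt 2 / 2)^2" using c by (intro power_mono) auto
    also have "\<dots> = 9/2" by (simp add: power_divide power_mult_distrib)
    finally show ?thesis .
  qed
  have "(4+2*1)* l = sqrt q * c" unfolding l_def by simp
  also have "\<dots> < c" using sq c by simp
  finally have h1: "(4+2*1)* l < c" .
  have ll: "l^2 = q * c^2 / 36" unfolding l_def using q by (simp add: power_divide power_mult_distrib)
  have "2*(1+1)^2* l^2 = 2 * q * c^2 / 9" using ll by simp
  also have "\<dots> \<le> 2 * q * (9/2) / 9" using c2 q by (intro divide_right_mono mult_left_mono) auto
  also have "\<dots> < 1" using q by simp
  finally have h2: "2*(1+1)^2* l^2 < (1::real)" .
  have A: "ereal (l^2*(4+8*1)) \<le> s_c c" by (rule asym[OF c(1) l0 _ _ h1 h2]) auto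
  have eq: "l^2*(4+8*1) = q * (c^2/3)" unfolding ll by simp
  show "ereal (q * (c^2/3)) \<le> s_c c" unfolding eq[symmetric] by (rule A)
qed

lemma V2:
  fixes c :: real
  assumes c: "3 * sqrt 2 / 2 \<le> c" "c \<le> 2 * sqrt 2"
  shows "ereal (- (c^2) + 4 * sqrt 2 * c - 6) \<le> s_c c"
proof -
  define s where "s = sqrt 2"
  have s: "s * s = 2" "0 < s" unfolding s_def by auto
  have cs: "3 * s / 2 \<le> c" "c \<le> 2 * s" using c unfolding s_def by auto
  have cps: "0 < c - s" using cs s by simp
  have c0: "0 < c" using cs s by simp
  define t where "t = (2* s - c)/(c - s)"
  have t0: "0 \<le> t" unfolding t_def using cs cps by simp
  have t1: "t \<le> 1" unfolding t_def using cs cps by (simp add: field_simps)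
  have e1: "(4+2* t)*((c-s)/2) = c" unfolding t_def using cps by (simp add: field_simps)
  have e2: "(1+t)*(c-s) = s" unfolding t_def using cps by (simp add: field_simps)
  have e3: "(1+2* t)*(c-s) = 3* s - c" unfolding t_def using cps by (simp add: field_simps)
  have g: "- (c^2) + 4 * s * c - 6 = (c - s)*(3* s - c)" using s by (simp add: algebra_simps power2_eq_square)
  have "ereal (- (c^2) + 4 * s * c - 6) \<le> s_c c"
  proof (rule q_lemma)
    show "0 \<le> - (c^2) + 4 * s * c - 6" unfolding g using cps cs by simp
    fix q :: real assume q: "0 < q" "q < 1"
    define l where "l = sqrt q * ((c - s)/2)"
    have sq: "sqrt q < 1" "0 < sqrt q" using q by auto
    have l0: "0 < l" unfolding l_def using sq cps by simp
    have "(4+2* t)* l = sqrt q * c" unfolding l_def using e1 by (metis mult.left_commute)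
    also have "\<dots> < c" using sq c0 by simp
    finally have h1: "(4+2* t)* l < c" .
    have ll: "l^2 = q * (c-s)^2/4" unfolding l_def using q by (simp add: power_divide power_mult_distrib)
    have "2*(1+t)^2* l^2 = q * ((1+t)*(c-s))^2 / 2" using ll by (simp add: power_mult_distrib)
    also have "\<dots> = q" using e2 s by (simp add: power2_eq_square)
    finally have h2: "2*(1+t)^2* l^2 < 1" using q by simp
    have A: "ereal (l^2*(4+8* t)) \<le> s_c c" by (rule asym[OF c0 l0 t0 t1 h1 h2])
    have eq: "l^2*(4+8* t) = q * (- (c^2) + 4 * s * c - 6)"
    proof -
      have "l^2*(4+8* t) = q * (c-s) * ((1+2* t)*(c-s))" unfolding ll by (simp add: power2_eq_square field_simps)
      also have "\<dots> = q * (- (c^2) + 4 * s * c - 6)" using e3 g by simp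
      finally show ?thesis .
    qed
    show "ereal (q * (- (c^2) + 4 * s * c - 6)) \<le> s_c c" unfolding eq[symmetric] by (rule A)
  qed
  then show ?thesis unfolding s_def .
qed



lemma I2:
  fixes c a :: real
  assumes a: "a \<noteq> 0"
  shows "- (c^2) + 7 * a * c + c / a - 11 * a^2 - 2 - 1 / (4 * a^2) \<le> c^2/3"
proof -
  define Q where "Q = 16 * a^2 * c^2/3 - 28 * a^3 * c - 4 * a * c + 44 * a^4 + 8 * a^2 + 1"
  have eq1: "4 * a^2 * (c^2/3 - (- (c^2) + 7 * a * c + c / a - 11 * a^2 - 2 - 1 / (4 * a^2))) = Q"
    unfolding Q_def using a by (simp add: field_simps power2_eq_square power3_eq_cube power4_eq_xxxx)
  have eq2: "(64 * a^2/3) * Q = (2 * (16 * a^2/3) * c - (28 * a^3 + 4 * a))^2 + (16 * a^2/3) * (29 * (a^2 - 5/29)^2 + 4/29)"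
    unfolding Q_def by (simp add: field_simps power2_eq_square power3_eq_cube power4_eq_xxxx)
  have "0 \<le> (64 * a^2/3) * Q" unfolding eq2 by (intro add_nonneg_nonneg mult_nonneg_nonneg) auto
  moreover have "0 < 64 * a^2/3" using a by simp
  ultimately have "0 \<le> Q" by (simp add: zero_le_mult_iff)
  then have "0 \<le> 4 * a^2 * (c^2/3 - (- (c^2) + 7 * a * c + c / a - 11 * a^2 - 2 - 1 / (4 * a^2)))"
    using eq1 by simp
  moreover have "0 < 4 * a^2" using a by simp
  ultimately show ?thesis by (simp add: zero_le_mult_iff)
qed

lemma I3:
  fixes c a :: real
  assumes a: "0 < a" and c: "3 * sqrt 2 / 2 \<le> c" "c \<le> 2 * sqrt 2"
  shows "- (c^2) + 7 * a * c + c / a - 11 * a^2 - 2 - 1 / (4 * a^2) \<le> - (c^2) + 4 * sqrt 2 * c - 6"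
proof -
  define s where "s = sqrt 2"
  have s: "s * s = 2" "0 < s" unfolding s_def by auto
  define w where "w = c / s"
  define u where "u = a * s"
  have u0: "0 < u" unfolding u_def using a s by simp
  have cw: "c = w * s" unfolding w_def using s by simp
  have au: "a = u / s" unfolding u_def using s by simp
  have w: "3/2 \<le> w" "w \<le> 2" unfolding w_def using c s s_def by (auto simp: field_simps)
  have f1: "s * c = 2 * w" unfolding cw using s by (simp add: algebra_simps)
  have f2: "a * c = w * u" unfolding cw au using s by simp
  have f3: "c / a = 2 * w / u" unfolding cw au using s u0 by (simp add: field_simps)
  have f4: "a^2 = u^2/2" unfolding au using s by (simp add: power2_eq_square field_simps)
  define K where "K = 7 * u/2 + 1/u - 4"
  define R where "R = 11 * u^2/2 + 1/(2 * u^2) - 4"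
  have diff: "(- (c^2) + 4 * s * c - 6) - (- (c^2) + 7 * a * c + c / a - 11 * a^2 - 2 - 1 / (4 * a^2)) = R - 2 * w * K"
  proof -
    have "(- (c^2) + 4 * s * c - 6) - (- (c^2) + 7 * a * c + c / a - 11 * a^2 - 2 - 1 / (4 * a^2))
        = 4 * (s * c) - 4 - 7 * (a * c) - c / a + 11 * a^2 + 1 / (4 * a^2)" by (simp add: algebra_simps)
    also have "\<dots> = 4 * (2 * w) - 4 - 7 * (w * u) - 2 * w / u + 11 * (u^2/2) + 1 / (4 * (u^2/2))"
      unfolding f1 f2 f3 f4 ..
    also have "\<dots> = R - 2 * w * K" unfolding R_def K_def using u0 by (simp add: field_simps)
    finally show ?thesis .
  qed
  have pA: "0 \<le> 2 * u^2 * (R - 4 * K)"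
  proof -
    have "2 * u^2 * (R - 4 * K) = (u - 1)^2 * (11 * (u - 3/11)^2 + 2/11)"
      unfolding R_def K_def using u0 by (simp add: field_simps power2_eq_square power3_eq_cube power4_eq_xxxx)
    then show ?thesis by simp
  qed
  have pB: "0 \<le> 2 * u^2 * (R - 3 * K)"
  proof -
    have "2 * u^2 * (R - 3 * K) = 11 * (u^2 - 21 * u/22 + 1/4)^2 + (21/44) * (u - 11/14)^2 + 1/56"
      unfolding R_def K_def using u0 by (simp add: field_simps power2_eq_square power3_eq_cube power4_eq_xxxx)
    then show ?thesis by (simp add: add_nonneg_nonneg)
  qed
  have u2: "0 < 2 * u^2" using u0 by simp
  have rA: "4 * K \<le> R" using pA u2 by (simp add: zero_le_mult_iff)
  have rB: "3 * K \<le> R" using pB u2 by (simp add: zero_le_mult_iff)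
  have "2 * w * K \<le> R"
  proof (cases "0 \<le> K")
    case True
    then have "2 * w * K \<le> 4 * K" using w by (intro mult_right_mono) auto
    then show ?thesis using rA by linarith
  next
    case False
    then have "2 * w * K \<le> 3 * K" using w by (intro mult_right_mono_neg) auto
    then show ?thesis using rB by linarith
  qed
  then show ?thesis using diff unfolding s_def by simp
qed


lemma c0_le: "c0 \<le> 3 * sqrt 2 / 2"
proof -
  have "7/3 \<le> sqrt 6" by (rule real_le_rsqrt) (simp add: power2_eq_square)
  then have "7 \<le> 3 * (sqrt 2 * sqrt 3)" by (simp add: real_sqrt_mult[symmetric])
  then show ?thesis unfolding c0_def by (simp add: field_simps)
qed

lemma c01: "c0 < c1"
proof -
  have "3 * sqrt 2 / 2 < 2 * sqrt 2" by simp
  then show ?thesis using c0_le unfolding c1_def by linarith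
qed

lemma alpha_pos:
  assumes "c0 \<le> c" shows "0 < alpha c"
proof -
  have "sqrt 3 * sqrt 2 \<le> 4"
  proof -
    have "sqrt 6 \<le> 4" by (rule real_sqrt_le_iff[THEN iffD2, of 6 16, simplified])
    then show ?thesis by (simp add: real_sqrt_mult[symmetric])
  qed
  then have "sqrt 3 / 4 \<le> 1 / sqrt 2" by (simp add: field_simps)
  then have "0 \<le> (1 / sqrt 2 - sqrt 3 / 4) / (c1 - c0)" using c01 by simp
  then have "0 \<le> (1 / sqrt 2 - sqrt 3 / 4) / (c1 - c0) * (c - c0)" using assms by (intro mult_nonneg_nonneg) auto
  moreover have "0 < sqrt 3 / 4" by simp
  ultimately show ?thesis unfolding alpha_def by linarith
qed

theorem lemma5:
  fixes c :: real
  assumes "c > 0"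
  shows "(c \<le> c0 \<longrightarrow> s_c c \<ge> ereal (9 * c^2 / 28)) \<and>
         (c0 \<le> c \<and> c \<le> c1 \<longrightarrow>
            s_c c \<ge> ereal (- (c^2) + 7 * alpha c * c + c / alpha c - 11 * (alpha c)^2 - 2
                             - 1 / (4 * (alpha c)^2)))"
proof (intro conjI impI)
  assume "c \<le> c0"
  then have "c \<le> 3 * sqrt 2 / 2" using c0_le by linarith
  then have "ereal (c^2/3) \<le> s_c c" using V1 assms by blast
  moreover have "9 * c^2 / 28 \<le> c^2/3" by simp
  ultimately show "ereal (9 * c^2 / 28) \<le> s_c c" by (meson ereal_less_eq(3) order_trans)
next
  assume h: "c0 \<le> c \<and> c \<le> c1"
  have ap: "0 < alpha c" using alpha_pos h by simp
  show "ereal (- (c^2) + 7 * alpha c * c + c / alpha c - 11 * (alpha c)^2 - 2 - 1 / (4 * (alpha c)^2)) \<le> s_c c"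
  proof (cases "c \<le> 3 * sqrt 2 / 2")
    case True
    have "ereal (c^2/3) \<le> s_c c" using V1 assms True by blast
    moreover have "- (c^2) + 7 * alpha c * c + c / alpha c - 11 * (alpha c)^2 - 2 - 1 / (4 * (alpha c)^2) \<le> c^2/3"
      using I2[of "alpha c" c] ap by (simp add: mult.commute mult.left_commute)
    ultimately show ?thesis by (meson ereal_less_eq(3) order_trans)
  next
    case False
    have c2: "c \<le> 2 * sqrt 2" using h unfolding c1_def by simp
    have "ereal (- (c^2) + 4 * sqrt 2 * c - 6) \<le> s_c c" using V2 False c2 by simp
    moreover have "- (c^2) + 7 * alpha c * c + c / alpha c - 11 * (alpha c)^2 - 2 - 1 / (4 * (alpha c)^2) \<le> - (c^2) + 4 * sqrt 2 * c - 6"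
      using I3[of "alpha c" c] ap False c2 by (simp add: mult.commute mult.left_commute)
    ultimately show ?thesis by (meson ereal_less_eq(3) order_trans)
  qed
qed

end
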